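(* Let $\mathcal{C}$ be a Frobenius category with stable category $\underline{\mathcal{C}}$ and projection functor $\pi\colon\mathcal{C}\to\underline{\mathcal{C}}$. Let $\mathcal{T}$ be a subcategory of $\mathcal{C}$ containing all projective-injective objects, and let $M\in\mathcal{C}$. If $\pi(M)$ has a $\pi(\mathcal{T})$-precover (respectively $\pi(\mathcal{T})$-preenvelope) in $\underline{\mathcal{C}}$, then $M$ has a $\mathcal{T}$-precover (respectively $\mathcal{T}$-preenvelope) in $\mathcal{C}$.
   Context: For a subcategory $\mathcal{B}$ of a category, a $\mathcal{B}$-precover of $M$ is a morphism $f\colon B\to M$ with $B\in\mathcal{B}$ such that every morphism $B'\to M$ with $B'\in\mathcal{B}$ factors through $f$; a $\mathcal{B}$-preenvelope is defined dually. Subcategories are full and additive. The stable category $\underline{\mathcal{C}}$ has the same objects as $\mathcal{C}$ and morphisms modulo those factoring through projective-injective objects. *)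

theory Defs
  imports Main
begin

record ('o, 'm) addcat =
  obj   :: "'o set"
  mor   :: "'m set"
  dm    :: "'m \<Rightarrow> 'o"
  cd    :: "'m \<Rightarrow> 'o"
  cmp   :: "'m \<Rightarrow> 'm \<Rightarrow> 'm"      (* cmp C g f = g o f *)
  idm   :: "'o \<Rightarrow> 'm"
  madd  :: "'m \<Rightarrow> 'm \<Rightarrow> 'm"
  mneg  :: "'m \<Rightarrow> 'm"
  mzero :: "'o \<Rightarrow> 'o \<Rightarrow> 'm"

definition Hom :: "('o,'m,'x) addcat_scheme \<Rightarrow> 'o \<Rightarrow> 'o \<Rightarrow> 'm set" where
  "Hom C X Y = {f \<in> mor C. dm C f = X \<and> cd C f = Y}"

definition category :: "('o,'m,'x) addcat_scheme \<Rightarrow> bool" where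
  "category C \<longleftrightarrow>
     (\<forall>f\<in>mor C. dm C f \<in> obj C \<and> cd C f \<in> obj C) \<and>
     (\<forall>X\<in>obj C. idm C X \<in> Hom C X X) \<and>
     (\<forall>f\<in>mor C. \<forall>g\<in>mor C. dm C g = cd C f \<longrightarrow> cmp C g f \<in> Hom C (dm C f) (cd C g)) \<and>
     (\<forall>f\<in>mor C. cmp C f (idm C (dm C f)) = f \<and> cmp C (idm C (cd C f)) f = f) \<and>
     (\<forall>f\<in>mor C. \<forall>g\<in>mor C. \<forall>h\<in>mor C. dm C g = cd C f \<longrightarrow> dm C h = cd C g \<longrightarrow>
        cmp C h (cmp C g f) = cmp C (cmp C h g) f)"

definition preadditive :: "('o,'m,'x) addcat_scheme \<Rightarrow> bool" where
  "preadditive C \<longleftrightarrow> category C \<and>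
     (\<forall>X\<in>obj C. \<forall>Y\<in>obj C.
        mzero C X Y \<in> Hom C X Y \<and>
        (\<forall>f\<in>Hom C X Y. mneg C f \<in> Hom C X Y \<and> madd C f (mzero C X Y) = f
                          \<and> madd C f (mneg C f) = mzero C X Y) \<and>
        (\<forall>f\<in>Hom C X Y. \<forall>g\<in>Hom C X Y. madd C f g \<in> Hom C X Y \<and> madd C f g = madd C g f) \<and>
        (\<forall>f\<in>Hom C X Y. \<forall>g\<in>Hom C X Y. \<forall>h\<in>Hom C X Y.
            madd C (madd C f g) h = madd C f (madd C g h))) \<and>
     (\<forall>X\<in>obj C. \<forall>Y\<in>obj C. \<forall>Z\<in>obj C.
        (\<forall>f\<in>Hom C X Y. \<forall>f'\<in>Hom C X Y. \<forall>g\<in>Hom C Y Z.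
            cmp C g (madd C f f') = madd C (cmp C g f) (cmp C g f')) \<and>
        (\<forall>f\<in>Hom C X Y. \<forall>g\<in>Hom C Y Z. \<forall>g'\<in>Hom C Y Z.
            cmp C (madd C g g') f = madd C (cmp C g f) (cmp C g' f)))"

definition zero_object :: "('o,'m,'x) addcat_scheme \<Rightarrow> 'o \<Rightarrow> bool" where
  "zero_object C Z \<longleftrightarrow> Z \<in> obj C \<and>
     (\<forall>X\<in>obj C. (\<exists>!f. f \<in> Hom C Z X) \<and> (\<exists>!f. f \<in> Hom C X Z))"

definition biproduct :: "('o,'m,'x) addcat_scheme \<Rightarrow> 'o \<Rightarrow> 'o \<Rightarrow> 'o \<Rightarrow> 'm \<Rightarrow> 'm \<Rightarrow> 'm \<Rightarrow> 'm \<Rightarrow> bool" where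
  "biproduct C X Y S i1 i2 p1 p2 \<longleftrightarrow>
     S \<in> obj C \<and> i1 \<in> Hom C X S \<and> i2 \<in> Hom C Y S \<and> p1 \<in> Hom C S X \<and> p2 \<in> Hom C S Y \<and>
     cmp C p1 i1 = idm C X \<and> cmp C p2 i2 = idm C Y \<and>
     cmp C p1 i2 = mzero C Y X \<and> cmp C p2 i1 = mzero C X Y \<and>
     madd C (cmp C i1 p1) (cmp C i2 p2) = idm C S"

definition additive :: "('o,'m,'x) addcat_scheme \<Rightarrow> bool" where
  "additive C \<longleftrightarrow> preadditive C \<and> (\<exists>Z. zero_object C Z) \<and>
     (\<forall>X\<in>obj C. \<forall>Y\<in>obj C. \<exists>S i1 i2 p1 p2. biproduct C X Y S i1 i2 p1 p2)"

definition iso :: "('o,'m,'x) addcat_scheme \<Rightarrow> 'm \<Rightarrow> bool" where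
  "iso C f \<longleftrightarrow> f \<in> mor C \<and>
     (\<exists>g\<in>Hom C (cd C f) (dm C f). cmp C g f = idm C (dm C f) \<and> cmp C f g = idm C (cd C f))"

definition is_kernel :: "('o,'m,'x) addcat_scheme \<Rightarrow> 'm \<Rightarrow> 'm \<Rightarrow> bool" where
  "is_kernel C i d \<longleftrightarrow> i \<in> mor C \<and> d \<in> mor C \<and> cd C i = dm C d \<and>
     cmp C d i = mzero C (dm C i) (cd C d) \<and>
     (\<forall>X\<in>obj C. \<forall>g\<in>Hom C X (dm C d). cmp C d g = mzero C X (cd C d) \<longrightarrow>
        (\<exists>!h. h \<in> Hom C X (dm C i) \<and> cmp C i h = g))"

definition is_cokernel :: "('o,'m,'x) addcat_scheme \<Rightarrow> 'm \<Rightarrow> 'm \<Rightarrow> bool" where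
  "is_cokernel C d i \<longleftrightarrow> i \<in> mor C \<and> d \<in> mor C \<and> cd C i = dm C d \<and>
     cmp C d i = mzero C (dm C i) (cd C d) \<and>
     (\<forall>Y\<in>obj C. \<forall>g\<in>Hom C (cd C i) Y. cmp C g i = mzero C (dm C i) Y \<longrightarrow>
        (\<exists>!h. h \<in> Hom C (cd C d) Y \<and> cmp C h d = g))"

definition kc_pair :: "('o,'m,'x) addcat_scheme \<Rightarrow> 'm \<Rightarrow> 'm \<Rightarrow> bool" where
  "kc_pair C i d \<longleftrightarrow> is_kernel C i d \<and> is_cokernel C d i"

definition inflation :: "('o,'m,'x) addcat_scheme \<Rightarrow> ('m \<times> 'm) set \<Rightarrow> 'm \<Rightarrow> bool" where
  "inflation C E i \<longleftrightarrow> (\<exists>d. (i, d) \<in> E)"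

definition deflation :: "('o,'m,'x) addcat_scheme \<Rightarrow> ('m \<times> 'm) set \<Rightarrow> 'm \<Rightarrow> bool" where
  "deflation C E d \<longleftrightarrow> (\<exists>i. (i, d) \<in> E)"

definition is_pushout :: "('o,'m,'x) addcat_scheme \<Rightarrow> 'm \<Rightarrow> 'm \<Rightarrow> 'o \<Rightarrow> 'm \<Rightarrow> 'm \<Rightarrow> bool" where
  "is_pushout C i f P i' f' \<longleftrightarrow> i \<in> mor C \<and> f \<in> mor C \<and> dm C f = dm C i \<and> P \<in> obj C \<and>
     i' \<in> Hom C (cd C f) P \<and> f' \<in> Hom C (cd C i) P \<and> cmp C i' f = cmp C f' i \<and>
     (\<forall>Z\<in>obj C. \<forall>u\<in>Hom C (cd C f) Z. \<forall>v\<in>Hom C (cd C i) Z. cmp C u f = cmp C v i \<longrightarrow>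
        (\<exists>!w. w \<in> Hom C P Z \<and> cmp C w i' = u \<and> cmp C w f' = v))"

definition is_pullback :: "('o,'m,'x) addcat_scheme \<Rightarrow> 'm \<Rightarrow> 'm \<Rightarrow> 'o \<Rightarrow> 'm \<Rightarrow> 'm \<Rightarrow> bool" where
  "is_pullback C d f P d' f' \<longleftrightarrow> d \<in> mor C \<and> f \<in> mor C \<and> cd C f = cd C d \<and> P \<in> obj C \<and>
     d' \<in> Hom C P (dm C f) \<and> f' \<in> Hom C P (dm C d) \<and> cmp C f d' = cmp C d f' \<and>
     (\<forall>Z\<in>obj C. \<forall>u\<in>Hom C Z (dm C f). \<forall>v\<in>Hom C Z (dm C d). cmp C f u = cmp C d v \<longrightarrow>
        (\<exists>!w. w \<in> Hom C Z P \<and> cmp C d' w = u \<and> cmp C f' w = v))"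

definition exact_structure :: "('o,'m,'x) addcat_scheme \<Rightarrow> ('m \<times> 'm) set \<Rightarrow> bool" where
  "exact_structure C E \<longleftrightarrow>
     (\<forall>(i, d)\<in>E. kc_pair C i d) \<and>
     \<comment> \<open>closed under isomorphisms of short exact sequences\<close>
     (\<forall>(i, d)\<in>E. \<forall>i' d' a b c.
        kc_pair C i' d' \<and> a \<in> Hom C (dm C i) (dm C i') \<and> b \<in> Hom C (cd C i) (cd C i') \<and>
        c \<in> Hom C (cd C d) (cd C d') \<and> iso C a \<and> iso C b \<and> iso C c \<and>
        cmp C i' a = cmp C b i \<and> cmp C d' b = cmp C c d \<longrightarrow> (i', d') \<in> E) \<and>
     \<comment> \<open>[E0], [E0op]\<close>
     (\<forall>X\<in>obj C. deflation C E (idm C X) \<and> inflation C E (idm C X)) \<and>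
     \<comment> \<open>[E1], [E1op]\<close>
     (\<forall>d d'. deflation C E d \<and> deflation C E d' \<and> dm C d' = cd C d \<longrightarrow> deflation C E (cmp C d' d)) \<and>
     (\<forall>i i'. inflation C E i \<and> inflation C E i' \<and> dm C i' = cd C i \<longrightarrow> inflation C E (cmp C i' i)) \<and>
     \<comment> \<open>[E2]: pushouts of inflations exist and are inflations\<close>
     (\<forall>i f. inflation C E i \<and> f \<in> mor C \<and> dm C f = dm C i \<longrightarrow>
        (\<exists>P i' f'. is_pushout C i f P i' f' \<and> inflation C E i')) \<and>
     \<comment> \<open>[E2op]: pullbacks of deflations exist and are deflations\<close>
     (\<forall>d f. deflation C E d \<and> f \<in> mor C \<and> cd C f = cd C d \<longrightarrow>
        (\<exists>P d' f'. is_pullback C d f P d' f' \<and> deflation C E d'))"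

definition projective :: "('o,'m,'x) addcat_scheme \<Rightarrow> ('m \<times> 'm) set \<Rightarrow> 'o \<Rightarrow> bool" where
  "projective C E P \<longleftrightarrow> P \<in> obj C \<and>
     (\<forall>d f. deflation C E d \<and> f \<in> Hom C P (cd C d) \<longrightarrow> (\<exists>g\<in>Hom C P (dm C d). cmp C d g = f))"

definition injective :: "('o,'m,'x) addcat_scheme \<Rightarrow> ('m \<times> 'm) set \<Rightarrow> 'o \<Rightarrow> bool" where
  "injective C E I \<longleftrightarrow> I \<in> obj C \<and>
     (\<forall>i f. inflation C E i \<and> f \<in> Hom C (dm C i) I \<longrightarrow> (\<exists>g\<in>Hom C (cd C i) I. cmp C g i = f))"

definition proj_inj :: "('o,'m,'x) addcat_scheme \<Rightarrow> ('m \<times> 'm) set \<Rightarrow> 'o \<Rightarrow> bool" where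
  "proj_inj C E P \<longleftrightarrow> projective C E P \<and> injective C E P"

definition frobenius_category :: "('o,'m,'x) addcat_scheme \<Rightarrow> ('m \<times> 'm) set \<Rightarrow> bool" where
  "frobenius_category C E \<longleftrightarrow> additive C \<and> exact_structure C E \<and>
     (\<forall>M\<in>obj C. \<exists>d. deflation C E d \<and> cd C d = M \<and> projective C E (dm C d)) \<and>
     (\<forall>M\<in>obj C. \<exists>i. inflation C E i \<and> dm C i = M \<and> injective C E (cd C i)) \<and>
     (\<forall>P. projective C E P \<longleftrightarrow> injective C E P)"

text \<open>A (full) additive subcategory, given by its class of objects: contains a zero
  object and contains a biproduct of any two of its objects.\<close>
definition additive_subcat :: "('o,'m,'x) addcat_scheme \<Rightarrow> 'o set \<Rightarrow> bool" where
  "additive_subcat C T \<longleftrightarrow> T \<subseteq> obj C \<and> (\<exists>Z\<in>T. zero_object C Z) \<and>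
     (\<forall>X\<in>T. \<forall>Y\<in>T. \<exists>S i1 i2 p1 p2. biproduct C X Y S i1 i2 p1 p2 \<and> S \<in> T)"

definition is_precover :: "('o,'m,'x) addcat_scheme \<Rightarrow> 'o set \<Rightarrow> 'o \<Rightarrow> 'o \<Rightarrow> 'm \<Rightarrow> bool" where
  "is_precover C T M B f \<longleftrightarrow> B \<in> T \<and> f \<in> Hom C B M \<and>
     (\<forall>B'\<in>T. \<forall>g\<in>Hom C B' M. \<exists>h\<in>Hom C B' B. g = cmp C f h)"

definition is_preenvelope :: "('o,'m,'x) addcat_scheme \<Rightarrow> 'o set \<Rightarrow> 'o \<Rightarrow> 'o \<Rightarrow> 'm \<Rightarrow> bool" where
  "is_preenvelope C T M B f \<longleftrightarrow> B \<in> T \<and> f \<in> Hom C M B \<and>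
     (\<forall>B'\<in>T. \<forall>g\<in>Hom C M B'. \<exists>h\<in>Hom C B B'. g = cmp C h f)"

definition has_precover where "has_precover C T M \<longleftrightarrow> (\<exists>B f. is_precover C T M B f)"
definition has_preenvelope where "has_preenvelope C T M \<longleftrightarrow> (\<exists>B f. is_preenvelope C T M B f)"

text \<open>Morphisms of the stable category are morphisms of C modulo those factoring
  through projective-injective objects; \<open>\<pi>\<close> is the identity on objects.\<close>
definition stably_zero :: "('o,'m,'x) addcat_scheme \<Rightarrow> ('m \<times> 'm) set \<Rightarrow> 'm \<Rightarrow> bool" where
  "stably_zero C E f \<longleftrightarrow> (\<exists>Q a b. proj_inj C E Q \<and> a \<in> Hom C (dm C f) Q \<and>
      b \<in> Hom C Q (cd C f) \<and> f = cmp C b a)"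

definition stable_eq :: "('o,'m,'x) addcat_scheme \<Rightarrow> ('m \<times> 'm) set \<Rightarrow> 'm \<Rightarrow> 'm \<Rightarrow> bool" where
  "stable_eq C E f g \<longleftrightarrow> f \<in> mor C \<and> g \<in> mor C \<and> dm C f = dm C g \<and> cd C f = cd C g \<and>
     stably_zero C E (madd C f (mneg C g))"

text \<open>\<open>\<pi>(T)\<close>-precover of \<open>\<pi>(M)\<close> in the stable category, written via representatives:
  a stable morphism \<open>[f] : \<pi>(B) \<rightarrow> \<pi>(M)\<close> with \<open>B \<in> T\<close> through which every stable
  morphism \<open>[g] : \<pi>(B') \<rightarrow> \<pi>(M)\<close>, \<open>B' \<in> T\<close>, factors.\<close>
definition is_stable_precover :: "('o,'m,'x) addcat_scheme \<Rightarrow> ('m \<times> 'm) set \<Rightarrow> 'o set \<Rightarrow> 'o \<Rightarrow> 'o \<Rightarrow> 'm \<Rightarrow> bool" where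
  "is_stable_precover C E T M B f \<longleftrightarrow> B \<in> T \<and> f \<in> Hom C B M \<and>
     (\<forall>B'\<in>T. \<forall>g\<in>Hom C B' M. \<exists>h\<in>Hom C B' B. stable_eq C E g (cmp C f h))"

definition is_stable_preenvelope :: "('o,'m,'x) addcat_scheme \<Rightarrow> ('m \<times> 'm) set \<Rightarrow> 'o set \<Rightarrow> 'o \<Rightarrow> 'o \<Rightarrow> 'm \<Rightarrow> bool" where
  "is_stable_preenvelope C E T M B f \<longleftrightarrow> B \<in> T \<and> f \<in> Hom C M B \<and>
     (\<forall>B'\<in>T. \<forall>g\<in>Hom C M B'. \<exists>h\<in>Hom C B B'. stable_eq C E g (cmp C h f))"

definition has_stable_precover where
  "has_stable_precover C E T M \<longleftrightarrow> (\<exists>B f. is_stable_precover C E T M B f)"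
definition has_stable_preenvelope where
  "has_stable_preenvelope C E T M \<longleftrightarrow> (\<exists>B f. is_stable_preenvelope C E T M B f)"

end

theory Submission
  imports Defs
begin

lemma Hom_objs:
  assumes "category C" "f \<in> Hom C X Y" shows "X \<in> obj C" "Y \<in> obj C"
  using assms unfolding category_def Hom_def by auto

lemma cmp_Hom:
  assumes "category C" "f \<in> Hom C X Y" "g \<in> Hom C Y Z" shows "cmp C g f \<in> Hom C X Z"
  using assms unfolding category_def Hom_def by auto

lemma cmp_assoc:
  assumes "category C" "f \<in> Hom C W X" "g \<in> Hom C X Y" "h \<in> Hom C Y Z"
  shows "cmp C h (cmp C g f) = cmp C (cmp C h g) f"
  using assms unfolding category_def Hom_def by auto

context
  fixes C :: "('o,'m,'x) addcat_scheme"
  assumes pa: "preadditive C"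
begin

lemma cat: "category C" using pa unfolding preadditive_def by auto

lemma zero_Hom: "X \<in> obj C \<Longrightarrow> Y \<in> obj C \<Longrightarrow> mzero C X Y \<in> Hom C X Y"
  using pa unfolding preadditive_def by auto

lemma add_Hom: "f \<in> Hom C X Y \<Longrightarrow> g \<in> Hom C X Y \<Longrightarrow> madd C f g \<in> Hom C X Y"
  using pa Hom_objs[OF cat] unfolding preadditive_def by meson

lemma neg_Hom: "f \<in> Hom C X Y \<Longrightarrow> mneg C f \<in> Hom C X Y"
  using pa Hom_objs[OF cat] unfolding preadditive_def by meson

lemma add_zero: "f \<in> Hom C X Y \<Longrightarrow> madd C f (mzero C X Y) = f"
  using pa Hom_objs[OF cat] unfolding preadditive_def by meson

lemma add_neg: "f \<in> Hom C X Y \<Longrightarrow> madd C f (mneg C f) = mzero C X Y"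
  using pa Hom_objs[OF cat] unfolding preadditive_def by meson

lemma add_comm: "f \<in> Hom C X Y \<Longrightarrow> g \<in> Hom C X Y \<Longrightarrow> madd C f g = madd C g f"
  using pa Hom_objs[OF cat] unfolding preadditive_def by meson

lemma add_assoc: "f \<in> Hom C X Y \<Longrightarrow> g \<in> Hom C X Y \<Longrightarrow> h \<in> Hom C X Y \<Longrightarrow>
   madd C (madd C f g) h = madd C f (madd C g h)"
  using pa Hom_objs[OF cat] unfolding preadditive_def by meson

lemma distl: "f \<in> Hom C X Y \<Longrightarrow> f' \<in> Hom C X Y \<Longrightarrow> g \<in> Hom C Y Z \<Longrightarrow>
   cmp C g (madd C f f') = madd C (cmp C g f) (cmp C g f')"
proof -
  assume a: "f \<in> Hom C X Y" "f' \<in> Hom C X Y" "g \<in> Hom C Y Z"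
  then have "X \<in> obj C" "Y \<in> obj C" "Z \<in> obj C" using Hom_objs[OF cat] by blast+
  then show ?thesis using a pa unfolding preadditive_def by blast
qed

lemma distr: "f \<in> Hom C X Y \<Longrightarrow> g \<in> Hom C Y Z \<Longrightarrow> g' \<in> Hom C Y Z \<Longrightarrow>
   cmp C (madd C g g') f = madd C (cmp C g f) (cmp C g' f)"
proof -
  assume a: "f \<in> Hom C X Y" "g \<in> Hom C Y Z" "g' \<in> Hom C Y Z"
  then have "X \<in> obj C" "Y \<in> obj C" "Z \<in> obj C" using Hom_objs[OF cat] by blast+
  then show ?thesis using a pa unfolding preadditive_def by blast
qed

lemma idem_zero:
  assumes x: "x \<in> Hom C X Y" and e: "madd C x x = x" shows "x = mzero C X Y"
proof -
  have n: "mneg C x \<in> Hom C X Y" using neg_Hom x .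
  have "madd C (madd C x x) (mneg C x) = madd C x (madd C x (mneg C x))"
    using add_assoc x n by blast
  also have "\<dots> = x" using add_neg[OF x] add_zero[OF x] by simp
  finally show ?thesis using e add_neg[OF x] by simp
qed

lemma comp_zero:
  assumes g: "g \<in> Hom C Y Z" and X: "X \<in> obj C" shows "cmp C g (mzero C X Y) = mzero C X Z"
proof -
  have Y: "Y \<in> obj C" using Hom_objs[OF cat g] by simp
  have z: "mzero C X Y \<in> Hom C X Y" using zero_Hom X Y .
  have zz: "madd C (mzero C X Y) (mzero C X Y) = mzero C X Y" using add_zero[OF z] .
  have h: "cmp C g (mzero C X Y) \<in> Hom C X Z" using cmp_Hom[OF cat z g] .
  have "madd C (cmp C g (mzero C X Y)) (cmp C g (mzero C X Y)) = cmp C g (mzero C X Y)"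
    using distl[OF z z g] zz by simp
  then show ?thesis using idem_zero h by blast
qed

lemma zero_comp:
  assumes f: "f \<in> Hom C X Y" and Z: "Z \<in> obj C" shows "cmp C (mzero C Y Z) f = mzero C X Z"
proof -
  have Y: "Y \<in> obj C" using Hom_objs[OF cat f] by simp
  have z: "mzero C Y Z \<in> Hom C Y Z" using zero_Hom Y Z .
  have zz: "madd C (mzero C Y Z) (mzero C Y Z) = mzero C Y Z" using add_zero[OF z] .
  have h: "cmp C (mzero C Y Z) f \<in> Hom C X Z" using cmp_Hom[OF cat f z] .
  have "madd C (cmp C (mzero C Y Z) f) (cmp C (mzero C Y Z) f) = cmp C (mzero C Y Z) f"
    using distr[OF f z z] zz by simp
  then show ?thesis using idem_zero h by blast
qed

lemma zero_add: "f \<in> Hom C X Y \<Longrightarrow> madd C (mzero C X Y) f = f"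
  using add_comm add_zero zero_Hom Hom_objs[OF cat] by metis

lemma diff_eq:
  assumes g: "g \<in> Hom C X Y" and u: "u \<in> Hom C X Y" and e: "madd C g (mneg C u) = v"
  shows "g = madd C u v"
proof -
  have n: "mneg C u \<in> Hom C X Y" using neg_Hom u .
  have "madd C u v = madd C u (madd C g (mneg C u))" using e by simp
  also have "\<dots> = madd C u (madd C (mneg C u) g)" using add_comm g n by metis
  also have "\<dots> = madd C (madd C u (mneg C u)) g" using add_assoc u n g by metis
  also have "\<dots> = g" using add_neg[OF u] zero_add[OF g] by simp
  finally show ?thesis by simp
qed

end


lemma frob_facts:
  assumes fr: "frobenius_category C E"
  shows "preadditive C" "projective C E P \<longleftrightarrow> proj_inj C E P" "injective C E P \<longleftrightarrow> proj_inj C E P"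
  using fr unfolding frobenius_category_def additive_def proj_inj_def by auto

lemma part1:
  fixes C :: "('o, 'm) addcat" and E :: "('m \<times> 'm) set" and T :: "'o set" and M :: 'o
  assumes fr: "frobenius_category C E"
    and sub: "additive_subcat C T"
    and PT: "\<forall>P. proj_inj C E P \<longrightarrow> P \<in> T"
    and M: "M \<in> obj C"
    and sp: "is_stable_precover C E T M B f"
  shows "has_precover C T M"
proof -
  have pa: "preadditive C" using frob_facts[OF fr] by blast
  have cat: "category C" using cat[OF pa] .
  obtain d where d: "deflation C E d" "cd C d = M" "projective C E (dm C d)"
    using fr M unfolding frobenius_category_def by blast
  define P where "P = dm C d"
  have dH: "d \<in> Hom C P M" using d fr unfolding P_def Hom_def deflation_def frobenius_category_def
      exact_structure_def kc_pair_def is_kernel_def by fastforce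
  have PT': "P \<in> T" using PT d(3) frob_facts[OF fr] P_def by blast
  have BT: "B \<in> T" and fH: "f \<in> Hom C B M" using sp unfolding is_stable_precover_def by auto
  obtain S i1 i2 p1 p2 where bp: "biproduct C B P S i1 i2 p1 p2" "S \<in> T"
    using sub BT PT' unfolding additive_subcat_def by blast
  have i1: "i1 \<in> Hom C B S" and i2: "i2 \<in> Hom C P S" and p1: "p1 \<in> Hom C S B"
    and p2: "p2 \<in> Hom C S P" and p1i1: "cmp C p1 i1 = idm C B" and p2i2: "cmp C p2 i2 = idm C P"
    and p1i2: "cmp C p1 i2 = mzero C P B" and p2i1: "cmp C p2 i1 = mzero C B P"
    using bp unfolding biproduct_def by auto
  define F where "F = madd C (cmp C f p1) (cmp C d p2)"
  have FH: "F \<in> Hom C S M" unfolding F_def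
    by (rule add_Hom[OF pa]; rule cmp_Hom[OF cat]) (use p1 p2 fH dH in auto)
  have "is_precover C T M S F"
    unfolding is_precover_def
  proof (intro conjI ballI)
    show "S \<in> T" by fact
    show "F \<in> Hom C S M" by fact
    fix B' g assume B'T: "B' \<in> T" and g: "g \<in> Hom C B' M"
    obtain h where h: "h \<in> Hom C B' B" and se: "stable_eq C E g (cmp C f h)"
      using sp B'T g unfolding is_stable_precover_def by blast
    have fh: "cmp C f h \<in> Hom C B' M" using cmp_Hom[OF cat h fH] .
    have dif: "madd C g (mneg C (cmp C f h)) \<in> Hom C B' M"
      using add_Hom[OF pa g neg_Hom[OF pa fh]] .
    obtain Q a b where Q: "proj_inj C E Q" and a: "a \<in> Hom C B' Q" and b: "b \<in> Hom C Q M"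
      and eq: "madd C g (mneg C (cmp C f h)) = cmp C b a"
      using se dif unfolding stable_eq_def stably_zero_def Hom_def by auto
    obtain b' where b': "b' \<in> Hom C Q P" and db: "cmp C d b' = b"
      using Q d b unfolding proj_inj_def projective_def P_def by blast
    define k where "k = cmp C b' a"
    have k: "k \<in> Hom C B' P" unfolding k_def using cmp_Hom[OF cat a b'] .
    have "cmp C d k = cmp C b a" unfolding k_def using cmp_assoc[OF cat a b' dH] db by simp
    then have gk: "g = madd C (cmp C f h) (cmp C d k)" using diff_eq[OF pa g fh] eq by simp
    define H where "H = madd C (cmp C i1 h) (cmp C i2 k)"
    have ih: "cmp C i1 h \<in> Hom C B' S" using cmp_Hom[OF cat h i1] .
    have ik: "cmp C i2 k \<in> Hom C B' S" using cmp_Hom[OF cat k i2] .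
    have HH: "H \<in> Hom C B' S" unfolding H_def using add_Hom[OF pa ih ik] .
    have fp1: "p1 \<in> Hom C S B" "cmp C f p1 \<in> Hom C S M" using cmp_Hom[OF cat p1 fH] p1 by auto
    have dp2: "cmp C d p2 \<in> Hom C S M" using cmp_Hom[OF cat p2 dH] .
    have B'o: "B' \<in> obj C" using Hom_objs[OF cat h] by simp
    have Bo: "B \<in> obj C" "P \<in> obj C" "M \<in> obj C" using Hom_objs[OF cat dH] Hom_objs[OF cat fH] by auto
    have e1: "cmp C (cmp C f p1) (cmp C i1 h) = cmp C f h"
      using cmp_assoc[OF cat h i1 fp1(2)] cmp_assoc[OF cat i1 p1 fH] p1i1 h fH cat
      unfolding category_def Hom_def by auto
    have e2: "cmp C (cmp C f p1) (cmp C i2 k) = mzero C B' M"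
    proof -
      have "cmp C (cmp C f p1) (cmp C i2 k) = cmp C (cmp C (cmp C f p1) i2) k"
        using cmp_assoc[OF cat k i2 fp1(2)] .
      also have "\<dots> = cmp C (cmp C f (mzero C P B)) k" using cmp_assoc[OF cat i2 p1 fH] p1i2 by simp
      also have "\<dots> = mzero C B' M" using comp_zero[OF pa fH Bo(2)] zero_comp[OF pa k Bo(3)] by simp
      finally show ?thesis .
    qed
    have e3: "cmp C (cmp C d p2) (cmp C i1 h) = mzero C B' M"
    proof -
      have "cmp C (cmp C d p2) (cmp C i1 h) = cmp C (cmp C (cmp C d p2) i1) h"
        using cmp_assoc[OF cat h i1 dp2] .
      also have "\<dots> = cmp C (cmp C d (mzero C B P)) h" using cmp_assoc[OF cat i1 p2 dH] p2i1 by simp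
      also have "\<dots> = mzero C B' M" using comp_zero[OF pa dH Bo(1)] zero_comp[OF pa h Bo(3)] by simp
      finally show ?thesis .
    qed
    have e4: "cmp C (cmp C d p2) (cmp C i2 k) = cmp C d k"
      using cmp_assoc[OF cat k i2 dp2] cmp_assoc[OF cat i2 p2 dH] p2i2 k dH cat
      unfolding category_def Hom_def by auto
    have "cmp C F H = madd C (cmp C F (cmp C i1 h)) (cmp C F (cmp C i2 k))"
      unfolding H_def using distl[OF pa ih ik FH] .
    also have "\<dots> = madd C (madd C (cmp C f h) (mzero C B' M)) (madd C (mzero C B' M) (cmp C d k))"
      unfolding F_def using distr[OF pa ih fp1(2) dp2] distr[OF pa ik fp1(2) dp2] e1 e2 e3 e4 by simp
    also have "\<dots> = g" using gk add_zero[OF pa fh] zero_add[OF pa cmp_Hom[OF cat k dH]] by simp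
    finally show "\<exists>h\<in>Hom C B' S. g = cmp C F h" using HH by metis
  qed
  then show ?thesis unfolding has_precover_def by blast
qed


lemma part2:
  fixes C :: "('o, 'm) addcat" and E :: "('m \<times> 'm) set" and T :: "'o set" and M :: 'o
  assumes fr: "frobenius_category C E"
    and sub: "additive_subcat C T"
    and PT: "\<forall>P. proj_inj C E P \<longrightarrow> P \<in> T"
    and M: "M \<in> obj C"
    and sp: "is_stable_preenvelope C E T M B f"
  shows "has_preenvelope C T M"
proof -
  have pa: "preadditive C" using frob_facts[OF fr] by blast
  have cat: "category C" using cat[OF pa] .
  obtain d where d: "inflation C E d" "dm C d = M" "injective C E (cd C d)"
    using fr M unfolding frobenius_category_def by blast
  define P where "P = cd C d"
  have dH: "d \<in> Hom C M P" using d fr unfolding P_def Hom_def inflation_def frobenius_category_def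
      exact_structure_def kc_pair_def is_kernel_def by fastforce
  have PT': "P \<in> T" using PT d(3) frob_facts[OF fr] P_def by blast
  have BT: "B \<in> T" and fH: "f \<in> Hom C M B" using sp unfolding is_stable_preenvelope_def by auto
  obtain S i1 i2 p1 p2 where bp: "biproduct C B P S i1 i2 p1 p2" "S \<in> T"
    using sub BT PT' unfolding additive_subcat_def by blast
  have i1: "i1 \<in> Hom C B S" and i2: "i2 \<in> Hom C P S" and p1: "p1 \<in> Hom C S B"
    and p2: "p2 \<in> Hom C S P" and p1i1: "cmp C p1 i1 = idm C B" and p2i2: "cmp C p2 i2 = idm C P"
    and p1i2: "cmp C p1 i2 = mzero C P B" and p2i1: "cmp C p2 i1 = mzero C B P"
    using bp unfolding biproduct_def by auto
  define F where "F = madd C (cmp C i1 f) (cmp C i2 d)"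
  have i1f: "cmp C i1 f \<in> Hom C M S" using cmp_Hom[OF cat fH i1] .
  have i2d: "cmp C i2 d \<in> Hom C M S" using cmp_Hom[OF cat dH i2] .
  have FH: "F \<in> Hom C M S" unfolding F_def using add_Hom[OF pa i1f i2d] .
  have "is_preenvelope C T M S F"
    unfolding is_preenvelope_def
  proof (intro conjI ballI)
    show "S \<in> T" by fact
    show "F \<in> Hom C M S" by fact
    fix B' g assume B'T: "B' \<in> T" and g: "g \<in> Hom C M B'"
    obtain h where h: "h \<in> Hom C B B'" and se: "stable_eq C E g (cmp C h f)"
      using sp B'T g unfolding is_stable_preenvelope_def by blast
    have fh: "cmp C h f \<in> Hom C M B'" using cmp_Hom[OF cat fH h] .
    have dif: "madd C g (mneg C (cmp C h f)) \<in> Hom C M B'"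
      using add_Hom[OF pa g neg_Hom[OF pa fh]] .
    obtain Q a b where Q: "proj_inj C E Q" and a: "a \<in> Hom C M Q" and b: "b \<in> Hom C Q B'"
      and eq: "madd C g (mneg C (cmp C h f)) = cmp C b a"
      using se dif unfolding stable_eq_def stably_zero_def Hom_def by auto
    obtain a' where a': "a' \<in> Hom C P Q" and ad: "cmp C a' d = a"
      using Q d a unfolding proj_inj_def injective_def P_def by blast
    define k where "k = cmp C b a'"
    have k: "k \<in> Hom C P B'" unfolding k_def using cmp_Hom[OF cat a' b] .
    have "cmp C k d = cmp C b a" unfolding k_def using cmp_assoc[OF cat dH a' b] ad by simp
    then have gk: "g = madd C (cmp C h f) (cmp C k d)" using diff_eq[OF pa g fh] eq by simp
    define H where "H = madd C (cmp C h p1) (cmp C k p2)"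
    have hp: "cmp C h p1 \<in> Hom C S B'" using cmp_Hom[OF cat p1 h] .
    have kp: "cmp C k p2 \<in> Hom C S B'" using cmp_Hom[OF cat p2 k] .
    have HH: "H \<in> Hom C S B'" unfolding H_def using add_Hom[OF pa hp kp] .
    have Bo: "B \<in> obj C" "P \<in> obj C" "M \<in> obj C" "B' \<in> obj C"
      using Hom_objs[OF cat dH] Hom_objs[OF cat fH] Hom_objs[OF cat h] by auto
    have e1: "cmp C (cmp C h p1) (cmp C i1 f) = cmp C h f"
      using cmp_assoc[OF cat fH i1 hp] cmp_assoc[OF cat i1 p1 h] p1i1 h fH cat
      unfolding category_def Hom_def by auto
    have e2: "cmp C (cmp C h p1) (cmp C i2 d) = mzero C M B'"
    proof -
      have "cmp C (cmp C h p1) (cmp C i2 d) = cmp C (cmp C (cmp C h p1) i2) d"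
        using cmp_assoc[OF cat dH i2 hp] .
      also have "\<dots> = cmp C (cmp C h (mzero C P B)) d" using cmp_assoc[OF cat i2 p1 h] p1i2 by simp
      also have "\<dots> = mzero C M B'" using comp_zero[OF pa h Bo(2)] zero_comp[OF pa dH Bo(4)] by simp
      finally show ?thesis .
    qed
    have e3: "cmp C (cmp C k p2) (cmp C i1 f) = mzero C M B'"
    proof -
      have "cmp C (cmp C k p2) (cmp C i1 f) = cmp C (cmp C (cmp C k p2) i1) f"
        using cmp_assoc[OF cat fH i1 kp] .
      also have "\<dots> = cmp C (cmp C k (mzero C B P)) f" using cmp_assoc[OF cat i1 p2 k] p2i1 by simp
      also have "\<dots> = mzero C M B'" using comp_zero[OF pa k Bo(1)] zero_comp[OF pa fH Bo(4)] by simp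
      finally show ?thesis .
    qed
    have e4: "cmp C (cmp C k p2) (cmp C i2 d) = cmp C k d"
      using cmp_assoc[OF cat dH i2 kp] cmp_assoc[OF cat i2 p2 k] p2i2 k dH cat
      unfolding category_def Hom_def by auto
    have "cmp C H F = madd C (cmp C H (cmp C i1 f)) (cmp C H (cmp C i2 d))"
      unfolding F_def using distl[OF pa i1f i2d HH] .
    also have "\<dots> = madd C (madd C (cmp C h f) (mzero C M B')) (madd C (mzero C M B') (cmp C k d))"
      unfolding H_def using distr[OF pa i1f hp kp] distr[OF pa i2d hp kp] e1 e2 e3 e4 by simp
    also have "\<dots> = g" using gk add_zero[OF pa fh] zero_add[OF pa cmp_Hom[OF cat dH k]] by simp
    finally show "\<exists>h\<in>Hom C S B'. g = cmp C h F" using HH by metis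
  qed
  then show ?thesis unfolding has_preenvelope_def by blast
qed

theorem lemmaA7:
  fixes C :: "('o, 'm) addcat" and E :: "('m \<times> 'm) set" and T :: "'o set" and M :: 'o
  assumes "frobenius_category C E"
    and "additive_subcat C T"
    and "\<forall>P. proj_inj C E P \<longrightarrow> P \<in> T"
    and "M \<in> obj C"
  shows "(has_stable_precover C E T M \<longrightarrow> has_precover C T M) \<and>
         (has_stable_preenvelope C E T M \<longrightarrow> has_preenvelope C T M)"
  using part1[OF assms] part2[OF assms]
  unfolding has_stable_precover_def has_stable_preenvelope_def by blast

end
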